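(* Let $V$ be a finite set, $A\subseteq V$, $i\in V$, and $t_i,\lambda\in\mathbb{C}$. Then (a) $\int d\psi_i\,d\bar\psi_i\,e^{t_i\bar\psi_i\psi_i}\,\tau_A=\tau_{A\setminus\{i\}}$ if $i\in A$, and $=t_i\tau_A$ if $i\notin A$; (b) $\int d\psi_i\,d\bar\psi_i\,e^{t_i\bar\psi_i\psi_i}\,f_A^{(\lambda)}=f_{A\setminus\{i\}}^{(\lambda)}+(t_i-\lambda)\tau_{A\setminus\{i\}}$ if $i\in A$, and $=t_if_A^{(\lambda)}$ if $i\notin A$.
   Context: For each $i\in V$ let $\psi_i,\bar\psi_i$ be anticommuting generators of a Grassmann algebra over $\mathbb{C}$; $\tau_A=\prod_{j\in A}\bar\psi_j\psi_j$ ($\tau_\emptyset=1$); $f_A^{(\lambda)}=\lambda(1-|A|)\tau_A+\sum_{j\in A}\tau_{A\setminus\{j\}}-\sum_{j,k\in A,\ j\neq k}\bar\psi_j\psi_k\,\tau_{A\setminus\{j,k\}}$ (with $f_\emptyset^{(\lambda)}=\lambda$). Berezin integration over the pair at $i$: $\int d\psi_i\,d\bar\psi_i$ is linear over the subalgebra generated by the other variables, with $\int d\psi_i\,d\bar\psi_i\,\bar\psi_i\psi_i=1$ and $\int d\psi_i\,d\bar\psi_i$ of $1,\psi_i,\bar\psi_i$ equal to $0$. *)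

theory Defs
  imports Complex_Main "HOL-Library.Function_Algebras"
begin

text \<open>Grassmann algebra over the complex numbers with generators psi_i = gen (i,False)
and psibar_i = gen (i,True), for i of a linearly ordered type.  An element is the
coefficient function on finite sets of generators; the set U stands for the ordered
monomial (product of the generators in U in increasing order w.r.t. gless).\<close>

type_synonym 'a grass = "('a \<times> bool) set \<Rightarrow> complex"

fun gless :: "'a::linorder \<times> bool \<Rightarrow> 'a \<times> bool \<Rightarrow> bool" where
  "gless (i, b) (j, c) = (i < j \<or> (i = j \<and> \<not> b \<and> c))"

text \<open>sign of the permutation sorting the concatenation of the ordered words S and T\<close>
definition gsign :: "('a::linorder \<times> bool) set \<Rightarrow> ('a \<times> bool) set \<Rightarrow> complex" where
  "gsign S T = (-1) ^ card {(s, t). s \<in> S \<and> t \<in> T \<and> gless t s}"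

definition gmul :: "'a::linorder grass \<Rightarrow> 'a grass \<Rightarrow> 'a grass" where
  "gmul f g = (\<lambda>U. if finite U then (\<Sum>S\<in>Pow U. gsign S (U - S) * f S * g (U - S)) else 0)"

definition smult :: "complex \<Rightarrow> 'a grass \<Rightarrow> 'a grass" where
  "smult c f = (\<lambda>U. c * f U)"

definition mono :: "('a \<times> bool) set \<Rightarrow> 'a grass" where
  "mono W = (\<lambda>U. if U = W then 1 else 0)"

definition gone :: "'a grass" where
  "gone = mono {}"

definition psi :: "'a \<Rightarrow> 'a grass" where
  "psi i = mono {(i, False)}"

definition psibar :: "'a \<Rightarrow> 'a grass" where
  "psibar i = mono {(i, True)}"

definition gpow :: "'a::linorder grass \<Rightarrow> nat \<Rightarrow> 'a grass" where
  "gpow x k = ((gmul x) ^^ k) gone"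

definition gens :: "'a grass \<Rightarrow> ('a \<times> bool) set" where
  "gens x = \<Union>{S. x S \<noteq> 0}"

text \<open>exponential: exp(body) times the (finite) exponential series of the nilpotent part
(which vanishes beyond degree card (gens x) for finitely supported x)\<close>
definition gexp :: "'a::linorder grass \<Rightarrow> 'a grass" where
  "gexp x = smult (exp (x {}))
     (\<Sum>k\<le>card (gens x). smult (1 / of_nat (fact k)) (gpow (x({} := 0)) k))"

text \<open>Berezin integral over the pair at i: write F = a + b psi_i + c psibar_i + d psibar_i psi_i
with a,b,c,d not involving the i-generators; the result is d.  The coefficient of d on
the monomial W is obtained by comparing mono (W + pair) with mono W * psibar_i psi_i.\<close>
definition berezin :: "'a::linorder \<Rightarrow> 'a grass \<Rightarrow> 'a grass" where
  "berezin i F = (\<lambda>W. if (i, False) \<in> W \<or> (i, True) \<in> W then 0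
     else gmul (mono W) (gmul (psibar i) (psi i)) (W \<union> {(i, False), (i, True)})
          * F (W \<union> {(i, False), (i, True)}))"

definition tau :: "'a::linorder set \<Rightarrow> 'a grass" where
  "tau A = foldr (\<lambda>j acc. gmul (gmul (psibar j) (psi j)) acc) (sorted_list_of_set A) gone"

definition fA :: "complex \<Rightarrow> 'a::linorder set \<Rightarrow> 'a grass" where
  "fA lam A = smult (lam * (1 - of_nat (card A))) (tau A)
     + (\<Sum>j\<in>A. tau (A - {j}))
     - (\<Sum>(j, k)\<in>{(j, k). j \<in> A \<and> k \<in> A \<and> j \<noteq> k}.
          gmul (gmul (psibar j) (psi k)) (tau (A - {j, k})))"

end

theory Submission imports Defs begin

lemma sum_fun_apply': "(\<Sum>x\<in>S. f x) W = (\<Sum>x\<in>S. (f x W :: complex))"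
  by (induction S rule: infinite_finite_induct) auto

lemma gmul_mono_mono:
  "gmul (mono S) (mono T) = (if finite S \<and> finite T \<and> S \<inter> T = {} then smult (gsign S T) (mono (S \<union> T)) else (\<lambda>_. 0))"
proof (rule ext)
  fix U :: "('a \<times> bool) set"
  show "gmul (mono S) (mono T) U = (if finite S \<and> finite T \<and> S \<inter> T = {} then smult (gsign S T) (mono (S \<union> T)) else (\<lambda>_. 0)) U"
  proof (cases "finite U")
    case True
    have "(\<Sum>S'\<in>Pow U. gsign S' (U - S') * mono S S' * mono T (U - S'))
        = (\<Sum>S'\<in>Pow U. if S' = S then gsign S (U - S) * mono T (U - S) else 0)"
      by (rule sum.cong) (auto simp: mono_def)
    also have "\<dots> = (if S \<subseteq> U then gsign S (U - S) * mono T (U - S) else 0)"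
      using True by (simp add: sum.delta')
    finally show ?thesis using True
      by (auto simp: gmul_def smult_def mono_def intro: finite_subset)
  next
    case False
    then show ?thesis by (auto simp: gmul_def smult_def mono_def)
  qed
qed


lemma gmul_smult_left: "gmul (smult c f) g = smult c (gmul f g)"
  by (auto simp: gmul_def smult_def sum_distrib_left intro!: ext sum.cong)

lemma gmul_smult_right: "gmul f (smult c g) = smult c (gmul f g)"
  by (auto simp: gmul_def smult_def sum_distrib_left intro!: ext sum.cong)

lemma smult_smult: "smult a (smult b f) = smult (a * b) f"
  by (simp add: smult_def mult.assoc)

abbreviation Q :: "'a \<Rightarrow> ('a \<times> bool) set" where "Q i \<equiv> {(i, False), (i, True)}"

lemma gsign_empty[simp]: "gsign S {} = 1" "gsign {} S = 1"
  by (auto simp: gsign_def)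

lemma psibar_psi: "gmul (psibar j) (psi k) = smult (gsign {(j, True)} {(k, False)}) (mono {(j, True), (k, False)})"
  by (simp add: psibar_def psi_def gmul_mono_mono insert_commute)

lemma gsign_ii: "gsign {(i, True)} {(i, False)} = -1"
proof -
  have "{(s, t). s \<in> {(i, True)} \<and> t \<in> {(i, False)} \<and> gless t s} = {((i,True),(i,False))}"
    by auto
  then show ?thesis by (simp add: gsign_def)
qed

lemma psibar_psi_ii: "gmul (psibar i) (psi i) = smult (-1) (mono (Q i))"
  by (simp add: psibar_psi gsign_ii insert_commute)

lemma gsign_union_Q:
  assumes "finite S" "finite T" "T \<inter> Q i = {}" "S \<inter> Q i = {}"
  shows "gsign S (T \<union> Q i) = gsign S T"
proof -
  let ?X = "{(s, t). s \<in> S \<and> t \<in> T \<and> gless t s}"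
  let ?Y = "{s\<in>S. i < fst s} \<times> Q i"
  have eq: "{(s, t). s \<in> S \<and> t \<in> T \<union> Q i \<and> gless t s} = ?X \<union> ?Y"
    using assms(4) by (auto simp: neq_iff)
  have fin: "finite ?X" by (rule finite_subset[of _ "S \<times> T"]) (use assms in auto)
  have fin2: "finite ?Y" using assms by auto
  have dis: "?X \<inter> ?Y = {}" using assms(3) by auto
  have c: "card ?Y = 2 * card {s\<in>S. i < fst s}" by (simp add: card_cartesian_product)
  show ?thesis unfolding gsign_def eq card_Un_disjoint[OF fin fin2 dis] c
    by (simp add: power_add power_mult)
qed

lemma gsign_Q_left:
  assumes "W \<inter> Q i = {}"
  shows "gsign (Q i) W = 1"
proof -
  have eq: "{(s, t). s \<in> Q i \<and> t \<in> W \<and> gless t s} = Q i \<times> {t\<in>W. fst t < i}"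
    using assms by (auto simp: neq_iff)
  show ?thesis unfolding gsign_def eq by (simp add: card_cartesian_product power_mult)
qed

lemma gsign_Q_right:
  assumes "W \<inter> Q i = {}"
  shows "gsign W (Q i) = 1"
proof -
  have eq: "{(s, t). s \<in> W \<and> t \<in> Q i \<and> gless t s} = {s\<in>W. i < fst s} \<times> Q i"
    using assms by (auto simp: neq_iff)
  show ?thesis unfolding gsign_def eq by (simp add: card_cartesian_product power_mult mult.commute)
qed


lemma gpow_Suc: "gpow x (Suc k) = gmul x (gpow x k)"
  by (simp add: gpow_def)

lemma gexp_E:
  "gexp (smult t (gmul (psibar i) (psi i))) = (\<lambda>U. if U = {} then 1 else if U = Q i then - t else 0)"
proof -
  define x where "x = smult t (gmul (psibar i) (psi i))"
  have x: "x = smult (-t) (mono (Q i))"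
    by (simp add: x_def psibar_psi_ii smult_smult)
  have x0: "x {} = 0" by (simp add: x smult_def mono_def)
  have xupd: "x({} := 0) = x" using x0 by auto
  have g1: "gpow x 1 = x"
    by (simp add: gpow_def gone_def x gmul_smult_left gmul_mono_mono smult_smult)
  have g2: "gpow x 2 = (\<lambda>_. 0)"
  proof -
    have "gpow x 2 = gmul x x" using gpow_Suc[of x 1] g1 by (simp add: numeral_2_eq_2)
    also have "\<dots> = (\<lambda>_. 0)" unfolding x gmul_smult_left gmul_smult_right gmul_mono_mono
      by (simp add: smult_def)
    finally show ?thesis .
  qed
  show ?thesis
  proof (cases "t = 0")
    case True
    then have "x = (\<lambda>_. 0)" by (simp add: x smult_def)
    then have "gens x = {}" by (simp add: gens_def)
    then show ?thesis unfolding x_def[symmetric] gexp_def x0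
      using True by (auto simp: gpow_def gone_def smult_def mono_def intro!: ext)
  next
    case False
    have "gens x = Q i"
      using False by (auto simp: gens_def x smult_def mono_def)
    then have c: "card (gens x) = 2" by simp
    have "gexp x = smult 1 (smult 1 (gpow x 0) + smult 1 (gpow x 1) + smult (1/2) (gpow x 2))"
      unfolding gexp_def c x0 xupd by (simp add: numeral_2_eq_2 atMost_Suc add_ac)
    then show ?thesis unfolding x_def[symmetric] g1 g2
      using False by (auto simp: gpow_def gone_def smult_def mono_def x intro!: ext)
  qed
qed

lemma gmul_E:
  "gmul (\<lambda>U. if U = {} then 1 else if U = Q i then - t else 0) F
   = (\<lambda>U. if finite U then F U - t * (if Q i \<subseteq> U then gsign (Q i) (U - Q i) * F (U - Q i) else 0) else 0)"
proof (rule ext)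
  fix U :: "('a \<times> bool) set"
  show "gmul (\<lambda>U. if U = {} then 1 else if U = Q i then - t else 0) F U =
        (if finite U then F U - t * (if Q i \<subseteq> U then gsign (Q i) (U - Q i) * F (U - Q i) else 0) else 0)"
  proof (cases "finite U")
    case True
    have "(\<Sum>S\<in>Pow U. gsign S (U - S) * (if S = {} then 1 else if S = Q i then - t else 0) * F (U - S))
       = (\<Sum>S\<in>Pow U. (if S = {} then F U else 0) + (if S = Q i then - t * (gsign (Q i) (U - Q i) * F (U - Q i)) else 0))"
      by (rule sum.cong) auto
    also have "\<dots> = F U - t * (if Q i \<subseteq> U then gsign (Q i) (U - Q i) * F (U - Q i) else 0)"
      using True by (simp add: sum.distrib sum.delta')
    finally show ?thesis using True by (simp add: gmul_def)
  qed (simp add: gmul_def)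
qed

definition Lop :: "'a::linorder \<Rightarrow> complex \<Rightarrow> 'a grass \<Rightarrow> 'a grass" where
  "Lop i t F = (\<lambda>W. if finite W \<and> W \<inter> Q i = {} then t * F W - F (W \<union> Q i) else 0)"

lemma berezin_Lop:
  "berezin i (gmul (gexp (smult t (gmul (psibar i) (psi i)))) F) = Lop i t F"
proof (rule ext)
  fix W :: "('a \<times> bool) set"
  show "berezin i (gmul (gexp (smult t (gmul (psibar i) (psi i)))) F) W = Lop i t F W"
  proof (cases "finite W \<and> W \<inter> Q i = {}")
    case True
    then have d: "W \<inter> Q i = {}" and f: "finite W" by auto
    have m: "gmul (mono W) (gmul (psibar i) (psi i)) (W \<union> Q i) = -1"
      unfolding psibar_psi_ii gmul_smult_right gmul_mono_mono
      using True by (simp add: smult_def mono_def gsign_Q_right)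
    have wq: "(W \<union> Q i) - Q i = W" using d by auto
    show ?thesis using True
      by (auto simp: berezin_def Lop_def gexp_E gmul_E m[simplified] wq gsign_Q_left[OF d] insert_commute algebra_simps)
  next
    case False
    then show ?thesis
    proof (cases "finite W")
      case True
      with False show ?thesis by (auto simp: berezin_def Lop_def)
    next
      case False
      then show ?thesis by (auto simp: berezin_def Lop_def gexp_E gmul_E)
    qed
  qed
qed


lemma tau_list:
  assumes "sorted_wrt (<) xs"
  shows "foldr (\<lambda>j acc. gmul (gmul (psibar j) (psi j)) acc) xs gone
         = smult ((-1) ^ length xs) (mono (set xs \<times> UNIV))"
  using assms
proof (induction xs)
  case Nil
  then show ?case by (simp add: gone_def smult_def)
next
  case (Cons x xs)
  have lt: "\<And>y. y \<in> set xs \<Longrightarrow> x < y" using Cons.prems by auto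
  have dis: "Q x \<inter> set xs \<times> UNIV = {}" using lt by auto
  have gs: "gsign (Q x) (set xs \<times> UNIV) = 1"
  proof -
    have e: "{(s, t). s \<in> Q x \<and> t \<in> set xs \<times> UNIV \<and> gless t s} = {}"
    proof -
      { fix s t assume "s \<in> Q x" "t \<in> set xs \<times> (UNIV::bool set)" "gless t s"
        then have False using lt by (cases t) (auto, (metis lt less_asym less_irrefl)+) }
      then show ?thesis by blast
    qed
    show ?thesis unfolding gsign_def e by simp
  qed
  have un: "Q x \<union> set xs \<times> UNIV = set (x # xs) \<times> UNIV"
    by (auto simp: UNIV_bool)
  have un2: "insert (x, False) (insert (x, True) (set xs \<times> UNIV)) = insert x (set xs) \<times> (UNIV::bool set)"
    by (auto simp: UNIV_bool)
  show ?case
    using Cons by (simp add: psibar_psi_ii gmul_smult_left gmul_smult_right gmul_mono_mono dis gs un un2 smult_smult)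
qed

lemma tau_eq:
  assumes "finite A"
  shows "tau A = smult ((-1) ^ card A) (mono (A \<times> UNIV))"
  unfolding tau_def using tau_list[of "sorted_list_of_set A"] assms
  by (simp add: sorted_list_of_set.length_sorted_key_list_of_set)

definition Gt :: "'a::linorder \<Rightarrow> 'a \<Rightarrow> 'a set \<Rightarrow> 'a grass" where
  "Gt j k B = gmul (gmul (psibar j) (psi k)) (tau B)"

lemma Gt_eq:
  assumes "finite B" "j \<notin> B" "k \<notin> B"
  shows "Gt j k B = smult (gsign {(j, True)} {(k, False)} * (-1) ^ card B * gsign {(j, True), (k, False)} (B \<times> UNIV))
           (mono ({(j, True), (k, False)} \<union> B \<times> UNIV))"
  using assms by (simp add: Gt_def tau_eq psibar_psi gmul_smult_left gmul_smult_right gmul_mono_mono smult_smult mult_ac)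


lemma Lop_add: "Lop i t (f + g) = Lop i t f + Lop i t g"
  by (auto simp: Lop_def algebra_simps intro!: ext)
lemma Lop_diff: "Lop i t (f - g) = Lop i t f - Lop i t g"
  by (auto simp: Lop_def algebra_simps intro!: ext)
lemma Lop_smult: "Lop i t (smult c f) = smult c (Lop i t f)"
  by (auto simp: Lop_def smult_def algebra_simps intro!: ext)
lemma Lop_sum: "Lop i t (\<Sum>x\<in>S. f x) = (\<Sum>x\<in>S. Lop i t (f x))"
  by (auto simp: Lop_def sum_fun_apply' sum_distrib_left sum_subtractf intro!: ext)
lemma smult_add: "smult c (f + g) = smult c f + smult c g"
  by (auto simp: smult_def algebra_simps intro!: ext)
lemma smult_diff: "smult c (f - g) = smult c f - smult c g"
  by (auto simp: smult_def algebra_simps intro!: ext)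
lemma smult_sum: "smult c (\<Sum>x\<in>S. f x) = (\<Sum>x\<in>S. smult c (f x))"
  by (auto simp: smult_def sum_fun_apply' sum_distrib_left intro!: ext)

lemma Lop_in:
  assumes "finite Z" "Q i \<subseteq> Z"
  shows "Lop i t (smult c (mono Z)) = smult (-c) (mono (Z - Q i))"
proof (rule ext)
  fix W :: "('a \<times> bool) set"
  have "(W \<union> Q i = Z \<and> W \<inter> Q i = {}) = (W = Z - Q i)" using assms by auto
  moreover have "W \<inter> Q i = {} \<Longrightarrow> W \<noteq> Z" using assms by auto
  ultimately show "Lop i t (smult c (mono Z)) W = smult (-c) (mono (Z - Q i)) W"
    using assms by (auto simp: Lop_def smult_def mono_def)
qed

lemma Lop_out:
  assumes "finite Z" "Z \<inter> Q i = {}"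
  shows "Lop i t (smult c (mono Z)) = smult (t * c) (mono Z)"
proof (rule ext)
  fix W :: "('a \<times> bool) set"
  have "W \<union> Q i \<noteq> Z" using assms by auto
  then show "Lop i t (smult c (mono Z)) W = smult (t * c) (mono Z) W"
    using assms by (auto simp: Lop_def smult_def mono_def)
qed

lemma Lop_half:
  assumes "Z \<inter> Q i \<noteq> {}" "\<not> Q i \<subseteq> Z"
  shows "Lop i t (smult c (mono Z)) = (\<lambda>_. 0)"
proof (rule ext)
  fix W :: "('a \<times> bool) set"
  show "Lop i t (smult c (mono Z)) W = 0"
    using assms by (auto simp: Lop_def smult_def mono_def)
qed

lemma Lop_tau_in:
  assumes "finite B" "i \<in> B"
  shows "Lop i t (tau B) = tau (B - {i})"
proof -
  have "Q i \<subseteq> B \<times> UNIV" using assms by auto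
  moreover have "B \<times> UNIV - Q i = (B - {i}) \<times> UNIV" by (auto simp: UNIV_bool)
  moreover have "(-1::complex) ^ card B = - ((-1) ^ (card B - Suc 0))"
    using assms by (cases "card B") auto
  ultimately show ?thesis using assms by (simp add: tau_eq Lop_in)
qed

lemma Lop_tau_out:
  assumes "finite B" "i \<notin> B"
  shows "Lop i t (tau B) = smult t (tau B)"
  using assms by (simp add: tau_eq Lop_out smult_smult)

lemma Lop_Gt_out:
  assumes "finite B" "i \<notin> B" "j \<notin> B" "k \<notin> B" "j \<noteq> i" "k \<noteq> i"
  shows "Lop i t (Gt j k B) = smult t (Gt j k B)"
  using assms by (simp add: Gt_eq Lop_out smult_smult)

lemma Lop_Gt_half:
  assumes "finite B" "i \<notin> B" "j \<notin> B" "k \<notin> B" "j \<noteq> k" "j = i \<or> k = i"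
  shows "Lop i t (Gt j k B) = (\<lambda>_. 0)"
  using assms by (auto simp: Gt_eq intro!: Lop_half)

lemma Lop_Gt_in:
  assumes "finite B" "i \<in> B" "j \<notin> B" "k \<notin> B" "j \<noteq> i" "k \<noteq> i"
  shows "Lop i t (Gt j k B) = Gt j k (B - {i})"
proof -
  let ?Y = "{(j, True), (k, False)}"
  have B: "B \<times> UNIV = (B - {i}) \<times> UNIV \<union> Q i" using assms by (auto simp: UNIV_bool)
  have gs: "gsign ?Y (B \<times> UNIV) = gsign ?Y ((B - {i}) \<times> UNIV)"
    unfolding B using assms by (intro gsign_union_Q) auto
  have "Q i \<subseteq> ?Y \<union> B \<times> UNIV" using assms by auto
  moreover have "?Y \<union> B \<times> UNIV - Q i = ?Y \<union> (B - {i}) \<times> UNIV" using assms by (auto simp: UNIV_bool)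
  moreover have "(-1::complex) ^ card B = - ((-1) ^ (card B - Suc 0))"
    using assms by (cases "card B") auto
  ultimately show ?thesis using assms by (simp add: Gt_eq Lop_in gs)
qed


lemma fA_Gt: "fA lam A = smult (lam * (1 - of_nat (card A))) (tau A)
     + (\<Sum>j\<in>A. tau (A - {j}))
     - (\<Sum>(j, k)\<in>{(j, k). j \<in> A \<and> k \<in> A \<and> j \<noteq> k}. Gt j k (A - {j, k}))"
  unfolding fA_def Gt_def ..

lemma finite_D: "finite A \<Longrightarrow> finite {(j, k). j \<in> A \<and> k \<in> A \<and> j \<noteq> k}"
  by (rule finite_subset[of _ "A \<times> A"]) auto

theorem lemma5p1:
  fixes V A :: "'a::linorder set" and i :: 'a and t lam :: complex
  assumes "finite V" and "A \<subseteq> V" and "i \<in> V"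
  shows "(berezin i (gmul (gexp (smult t (gmul (psibar i) (psi i)))) (tau A))
           = (if i \<in> A then tau (A - {i}) else smult t (tau A)))
         \<and> (berezin i (gmul (gexp (smult t (gmul (psibar i) (psi i)))) (fA lam A))
           = (if i \<in> A then fA lam (A - {i}) + smult (t - lam) (tau (A - {i}))
              else smult t (fA lam A)))"
proof -
  have fin: "finite A" using assms finite_subset by blast
  define D where "D = (\<lambda>S::'a set. {(j, k). j \<in> S \<and> k \<in> S \<and> j \<noteq> k})"
  define G where "G = (\<lambda>S::'a set. \<lambda>(j, k). Gt j k (S - {j, k}))"
  have fAG: "\<And>S. fA lam S = smult (lam * (1 - of_nat (card S))) (tau S)
     + (\<Sum>j\<in>S. tau (S - {j})) - (\<Sum>p\<in>D S. G S p)"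
    unfolding D_def G_def by (rule fA_Gt)
  have a: "berezin i (gmul (gexp (smult t (gmul (psibar i) (psi i)))) (tau A))
           = (if i \<in> A then tau (A - {i}) else smult t (tau A))"
    using fin by (simp add: berezin_Lop Lop_tau_in Lop_tau_out)
  have b: "Lop i t (fA lam A) = (if i \<in> A then fA lam (A - {i}) + smult (t - lam) (tau (A - {i}))
              else smult t (fA lam A))"
  proof (cases "i \<in> A")
    case False
    have s1: "(\<Sum>j\<in>A. Lop i t (tau (A - {j}))) = (\<Sum>j\<in>A. smult t (tau (A - {j})))"
      by (rule sum.cong) (use fin False in \<open>auto intro: Lop_tau_out\<close>)
    have s2: "(\<Sum>p\<in>D A. Lop i t (G A p)) = (\<Sum>p\<in>D A. smult t (G A p))"
      by (rule sum.cong) (use fin False in \<open>auto simp: D_def G_def intro!: Lop_Gt_out\<close>)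
    show ?thesis using False fin
      by (simp add: fAG Lop_add Lop_diff Lop_smult Lop_sum s1 s2 smult_add smult_diff smult_sum
          Lop_tau_out smult_smult mult.commute)
  next
    case True
    define A' where "A' = A - {i}"
    have finA': "finite A'" using fin by (simp add: A'_def)
    have iA': "i \<notin> A'" by (simp add: A'_def)
    have cA: "card A = Suc (card A')" using fin True unfolding A'_def by (metis card_Suc_Diff1)
    have s1: "(\<Sum>j\<in>A. Lop i t (tau (A - {j}))) = smult t (tau A') + (\<Sum>j\<in>A'. tau (A' - {j}))"
    proof -
      have "(\<Sum>j\<in>A. Lop i t (tau (A - {j}))) = Lop i t (tau (A - {i})) + (\<Sum>j\<in>A'. Lop i t (tau (A - {j})))"
        unfolding A'_def using fin True by (rule sum.remove)
      also have "Lop i t (tau (A - {i})) = smult t (tau A')"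
        using finA' iA' by (simp add: A'_def[symmetric] Lop_tau_out)
      also have "(\<Sum>j\<in>A'. Lop i t (tau (A - {j}))) = (\<Sum>j\<in>A'. tau (A' - {j}))"
      proof (rule sum.cong)
        fix j assume j: "j \<in> A'"
        have "A - {j} - {i} = A' - {j}" by (auto simp: A'_def)
        then show "Lop i t (tau (A - {j})) = tau (A' - {j})"
          using j fin True by (subst Lop_tau_in) (auto simp: A'_def)
      qed simp
      finally show ?thesis .
    qed
    have s2: "(\<Sum>p\<in>D A. Lop i t (G A p)) = (\<Sum>p\<in>D A'. G A' p)"
    proof (rule sum.mono_neutral_cong_right)
      show "finite (D A)" unfolding D_def using fin by (rule finite_D)
      show "D A' \<subseteq> D A" by (auto simp: D_def A'_def)
      show "\<forall>p\<in>D A - D A'. Lop i t (G A p) = 0"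
        using fin by (auto simp: D_def A'_def G_def zero_fun_def intro!: Lop_Gt_half)
      fix p assume p: "p \<in> D A'"
      then obtain j k where jk: "p = (j, k)" "j \<in> A'" "k \<in> A'" "j \<noteq> k" by (auto simp: D_def)
      have e: "A - {j, k} - {i} = A' - {j, k}" by (auto simp: A'_def)
      show "Lop i t (G A p) = G A' p"
        using jk fin True by (simp add: G_def, subst Lop_Gt_in) (auto simp: A'_def e)
    qed
    have "Lop i t (fA lam A) = smult (lam * (1 - of_nat (card A))) (tau A')
        + (smult t (tau A') + (\<Sum>j\<in>A'. tau (A' - {j}))) - (\<Sum>p\<in>D A'. G A' p)"
      using fin True
      by (simp add: fAG Lop_add Lop_diff Lop_smult Lop_sum s1 s2 Lop_tau_in A'_def)
    also have "\<dots> = fA lam A' + smult (t - lam) (tau A')"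
      unfolding fAG cA by (auto simp: smult_def algebra_simps intro!: ext)
    finally show ?thesis using True by (simp add: A'_def)
  qed
  show ?thesis using a b by (simp add: berezin_Lop)
qed

end
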